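(* Let $H$ be a $k$-graph on vertex set $[n]$ ($n$ divisible by $q$) and let $r=r(n)\ll n^{k-3/2}$. Let $\sigma_1,\dots,\sigma_r$ be independent uniformly random permutations of $[n]$ and $D_i=D_{\sigma_i}$. Then with probability $1-o(n^{-1})$, for every $t$ with $1\le t\le 2q-k$, every set $S$ of $k+t$ vertices is condensed in at most $4q+1$ of the $D_i$.
   Context: Fixed integers $k,\ell$ with $1\le\ell<k/2$; $z=\lceil(k-\ell)/\ell\rceil$, $q=\ell z$. $a_n\ll b_n$ means $b_n/a_n\to\infty$. For ordered $q$-tuples $\mathbf v_1=(v_1,\dots,v_q)$, $\mathbf v_2=(v_{q+1},\dots,v_{2q})$ let $e_i(\mathbf v_1,\mathbf v_2)=\{v_{i\ell+1},\dots,v_{i\ell+k}\}$, $i=0,\dots,z-1$; $\mathbf v_1$ precedes $\mathbf v_2$ if all these are edges of $H$, and then $(\mathbf v_1,\mathbf v_2)$ owns these $z$ edges. For a permutation $\sigma$ of $[n]$, $D_\sigma$ has vertex set $\{(\sigma((i-1)q+1),\dots,\sigma(iq)):i\le n/q\}$ and an arc $\mathbf v\to\mathbf w$ ($\mathbf v\ne\mathbf w$) iff $\mathbf v$ precedes $\mathbf w$. Each edge $e$ of $H$ is owned by at most one arc $u_i(e)$ of $D_i$; if it exists, $\phi_i(e)$ denotes the set of $z$ edges owned by $u_i(e)$ (so $e\in\phi_i(e)$). A set $S$ of $k+t$ vertices is condensed in $D_i$ if there exist edges $e_1\neq e_2$ of $H$ with $S=e_1\cup e_2$ and $\phi_i(e_1)\cap\phi_i(e_2)\neq\emptyset$.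 *)

theory Defs
  imports Complex_Main "HOL-Combinatorics.Permutations" "HOL-Library.FuncSet"
begin

definition zpar :: "nat \<Rightarrow> nat \<Rightarrow> nat" where
  "zpar k l = nat \<lceil>real (k - l) / real l\<rceil>"

definition qpar :: "nat \<Rightarrow> nat \<Rightarrow> nat" where
  "qpar k l = l * zpar k l"

text \<open>A q-tuple is a list; the concatenation v = v1 @ v2 has v!(j-1) = v_j.
  e_i(v1,v2) = {v_{il+1}, ..., v_{il+k}}.\<close>
definition ewin :: "nat \<Rightarrow> nat \<Rightarrow> nat list \<Rightarrow> nat list \<Rightarrow> nat \<Rightarrow> nat set" where
  "ewin k l v1 v2 i = set (take k (drop (i * l) (v1 @ v2)))"

definition precedes :: "nat set set \<Rightarrow> nat \<Rightarrow> nat \<Rightarrow> nat list \<Rightarrow> nat list \<Rightarrow> bool" where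
  "precedes H k l v1 v2 \<longleftrightarrow> (\<forall>i < zpar k l. ewin k l v1 v2 i \<in> H)"

definition owned :: "nat \<Rightarrow> nat \<Rightarrow> nat list \<Rightarrow> nat list \<Rightarrow> nat set set" where
  "owned k l v1 v2 = {ewin k l v1 v2 i | i. i < zpar k l}"

definition blk :: "nat \<Rightarrow> (nat \<Rightarrow> nat) \<Rightarrow> nat \<Rightarrow> nat list" where
  "blk q \<sigma> i = map \<sigma> [(i - 1) * q + 1 ..< i * q + 1]"

definition Dverts :: "nat \<Rightarrow> nat \<Rightarrow> nat \<Rightarrow> (nat \<Rightarrow> nat) \<Rightarrow> nat list set" where
  "Dverts k l n \<sigma> = {blk (qpar k l) \<sigma> i | i. 1 \<le> i \<and> i \<le> n div qpar k l}"

definition Darc :: "nat set set \<Rightarrow> nat \<Rightarrow> nat \<Rightarrow> nat \<Rightarrow> (nat \<Rightarrow> nat) \<Rightarrow> nat list \<Rightarrow> nat list \<Rightarrow> bool" where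
  "Darc H k l n \<sigma> v w \<longleftrightarrow> v \<in> Dverts k l n \<sigma> \<and> w \<in> Dverts k l n \<sigma> \<and> v \<noteq> w \<and> precedes H k l v w"

definition has_owner :: "nat set set \<Rightarrow> nat \<Rightarrow> nat \<Rightarrow> nat \<Rightarrow> (nat \<Rightarrow> nat) \<Rightarrow> nat set \<Rightarrow> bool" where
  "has_owner H k l n \<sigma> e \<longleftrightarrow> (\<exists>v w. Darc H k l n \<sigma> v w \<and> e \<in> owned k l v w)"

definition phi :: "nat set set \<Rightarrow> nat \<Rightarrow> nat \<Rightarrow> nat \<Rightarrow> (nat \<Rightarrow> nat) \<Rightarrow> nat set \<Rightarrow> nat set set" where
  "phi H k l n \<sigma> e = (THE A. \<exists>v w. Darc H k l n \<sigma> v w \<and> e \<in> owned k l v w \<and> A = owned k l v w)"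

definition condensed :: "nat set set \<Rightarrow> nat \<Rightarrow> nat \<Rightarrow> nat \<Rightarrow> (nat \<Rightarrow> nat) \<Rightarrow> nat set \<Rightarrow> bool" where
  "condensed H k l n \<sigma> S \<longleftrightarrow>
     (\<exists>e1 e2. e1 \<in> H \<and> e2 \<in> H \<and> e1 \<noteq> e2 \<and> S = e1 \<union> e2 \<and>
        has_owner H k l n \<sigma> e1 \<and> has_owner H k l n \<sigma> e2 \<and>
        phi H k l n \<sigma> e1 \<inter> phi H k l n \<sigma> e2 \<noteq> {})"

definition kgraph :: "nat \<Rightarrow> nat \<Rightarrow> nat set set \<Rightarrow> bool" where
  "kgraph k n H \<longleftrightarrow> (\<forall>e \<in> H. e \<subseteq> {1..n} \<and> card e = k)"

text \<open>Sample space: r independent uniform permutations of [n], as the uniform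
  distribution on the finite set of r-tuples of permutations.\<close>
definition perm_tuples :: "nat \<Rightarrow> nat \<Rightarrow> (nat \<Rightarrow> nat \<Rightarrow> nat) set" where
  "perm_tuples n r = Pi\<^sub>E {..<r} (\<lambda>_. {\<sigma>. \<sigma> permutes {1..n}})"

definition bad :: "nat set set \<Rightarrow> nat \<Rightarrow> nat \<Rightarrow> nat \<Rightarrow> nat \<Rightarrow> (nat \<Rightarrow> nat \<Rightarrow> nat) set" where
  "bad H k l n r = {\<sigma>s \<in> perm_tuples n r.
     \<exists>t. 1 \<le> t \<and> t \<le> 2 * qpar k l - k \<and>
       (\<exists>S. S \<subseteq> {1..n} \<and> card S = k + t \<and>
          card {i \<in> {..<r}. condensed H k l n (\<sigma>s i) S} > 4 * qpar k l + 1)}"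

definition fail_prob :: "nat set set \<Rightarrow> nat \<Rightarrow> nat \<Rightarrow> nat \<Rightarrow> nat \<Rightarrow> real" where
  "fail_prob H k l n r = real (card (bad H k l n r)) / real (card (perm_tuples n r))"

end

theory Submission
  imports Defs
begin


lemma params:
  assumes "1 \<le> l" "2 * l < k"
  shows "1 \<le> zpar k l" "qpar k l < k" "k < 2 * qpar k l" "k \<le> qpar k l + l" "0 < qpar k l"
proof -
  define z where "z = zpar k l"
  have zr: "real z = of_int \<lceil>real (k - l) / real l\<rceil>"
    unfolding z_def zpar_def using assms by simp
  have lpos: "real l > 0" using assms by simp
  have kl: "real (k - l) = real k - real l" using assms by simp
  have z1: "real z \<ge> (real k - real l) / real l" using zr kl by (simp add: le_of_int_ceiling)
  have z2': "real z < real (k - l) / real l + 1"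
    using zr ceiling_correct[of "real (k - l) / real l"] by linarith
  have z2: "real z < (real k - real l) / real l + 1" using z2' kl by simp
  have a1: "real l * real z \<ge> real k - real l" using z1 lpos by (simp add: field_simps)
  have a2: "real l * real z < real k" using z2 lpos by (simp add: field_simps)
  have "real k \<le> real (l * z + l)" using a1 by simp
  then have b1: "l * z + l \<ge> k" by (simp only: of_nat_le_iff)
  have "real (l * z) < real k" using a2 by simp
  then have b2: "l * z < k" by (simp only: of_nat_less_iff)
  have q: "qpar k l = l * z" unfolding qpar_def z_def by simp
  show "k \<le> qpar k l + l" using b1 q by simp
  show "qpar k l < k" using b2 q by simp
  show "k < 2 * qpar k l" using b1 q assms by simp
  have zne: "z \<noteq> 0"
  proof
    assume "z = 0" then have "k \<le> l" using b1 by simp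
    with assms show False by simp
  qed
  show "0 < qpar k l" using zne q assms by simp
  show "1 \<le> zpar k l" using zne z_def by simp
qed

lemma window:
  assumes "1 \<le> a" "1 \<le> b" "i*l \<le> q" "q \<le> i*l + k" "i*l+k \<le> 2*q"
  shows "ewin k l (blk q \<sigma> a) (blk q \<sigma> b) i =
     \<sigma> ` ({(a-1)*q+1+i*l ..< a*q+1} \<union> {(b-1)*q+1 ..< (b-1)*q+1+(i*l+k-q)})"
proof -
  have aq: "a*q = (a-1)*q + q" using assms(1) by (cases a) auto
  have bq: "b*q = (b-1)*q + q" using assms(2) by (cases b) auto
  define A where "A = [(a-1)*q+1..<a*q+1]"
  define B where "B = [(b-1)*q+1..<b*q+1]"
  have lA: "length A = q" unfolding A_def using aq by simp
  have e1: "drop (i*l) (A @ B) = drop (i*l) A @ B" using lA assms by simp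
  have e2: "take k (drop (i*l) A @ B) = drop (i*l) A @ take (i*l+k-q) B"
    using lA assms by (simp add: add.commute)
  have e3: "drop (i*l) A = [(a-1)*q+1+i*l..<a*q+1]" unfolding A_def drop_upt by (simp add: ac_simps)
  have e4: "take (i*l+k-q) B = [(b-1)*q+1 ..< (b-1)*q+1+(i*l+k-q)]"
    unfolding B_def using bq assms by (subst take_upt) auto
  have "take k (drop (i*l) (A @ B)) = [(a-1)*q+1+i*l..<a*q+1] @ [(b-1)*q+1 ..< (b-1)*q+1+(i*l+k-q)]"
  proof -
    have "take k (drop (i*l) (A @ B)) = drop (i*l) A @ take (i*l+k-q) B" using e1 e2 by simp
    then show ?thesis by (simp only: e3 e4)
  qed
  then have ST: "set (take k (drop (i*l) (A @ B))) =
     {(a-1)*q+1+i*l ..< a*q+1} \<union> {(b-1)*q+1 ..< (b-1)*q+1+(i*l+k-q)}" by (simp only: set_append set_upt)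
  have BL: "blk q \<sigma> a @ blk q \<sigma> b = map \<sigma> (A @ B)" unfolding blk_def A_def B_def by simp
  have X: "set (take k (drop (i*l) (map \<sigma> (A@B)))) = \<sigma> ` set (take k (drop (i*l) (A@B)))"
    by (simp only: drop_map take_map set_map)
  show ?thesis unfolding ewin_def BL X ST by (rule refl)
qed

definition J :: "nat \<Rightarrow> nat \<Rightarrow> nat set" where "J q a = {(a-1)*q+1 ..< a*q+1}"

lemma J_disj:
  assumes "1 \<le> a" "1 \<le> b" "x \<in> J q a" "x \<in> J q b" shows "a = b"
proof (rule ccontr)
  assume "a \<noteq> b"
  then consider "a < b" | "b < a" by linarith
  then show False
  proof cases
    case 1
    then have "a * q \<le> (b-1) * q" by (intro mult_le_mono1) linarith
    moreover have "x < a*q+1" "(b-1)*q+1 \<le> x" using assms(3,4) unfolding J_def by auto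
    ultimately show False by linarith
  next
    case 2
    then have "b * q \<le> (a-1) * q" by (intro mult_le_mono1) linarith
    moreover have "x < b*q+1" "(a-1)*q+1 \<le> x" using assms(3,4) unfolding J_def by auto
    ultimately show False by linarith
  qed
qed

lemma J_sub:
  assumes "1 \<le> a" "a \<le> n div q" shows "J q a \<subseteq> {1..n}"
proof -
  have "a * q \<le> (n div q) * q" using assms by (intro mult_le_mono1)
  also have "\<dots> \<le> n" by (rule div_times_less_eq_dividend)
  finally show ?thesis unfolding J_def by auto
qed

lemma J_card: "1 \<le> a \<Longrightarrow> card (J q a) = q" unfolding J_def
  by (cases a) auto

lemma J_last: "1 \<le> a \<Longrightarrow> 0 < q \<Longrightarrow> a * q \<in> J q a"
  unfolding J_def by (cases a) auto

lemma J_first: "1 \<le> a \<Longrightarrow> 0 < q \<Longrightarrow> (a-1) * q + 1 \<in> J q a"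
  unfolding J_def by (cases a) auto

definition W :: "nat \<Rightarrow> nat \<Rightarrow> nat \<Rightarrow> nat \<Rightarrow> nat \<Rightarrow> nat \<Rightarrow> nat set" where
  "W k l q a b i = {(a-1)*q+1+i*l ..< a*q+1} \<union> {(b-1)*q+1 ..< (b-1)*q+1+(i*l+k-q)}"

locale Cfg =
  fixes k l :: nat
  assumes l1: "1 \<le> l" and lk: "2 * l < k"
begin

abbreviation "q \<equiv> qpar k l"
abbreviation "z \<equiv> zpar k l"

lemma qk: "q < k" and kq: "k < 2 * q" and kql: "k \<le> q + l" and qpos: "0 < q" and z1: "1 \<le> z"
  using params[OF l1 lk] by auto

lemma qlz: "q = l * z" unfolding qpar_def by simp

lemma il: assumes "i < z" shows "i * l + l \<le> q"
proof -
  have "(i+1) * l \<le> z * l" using assms by (intro mult_le_mono1) simp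
  then show ?thesis using qlz by (simp add: algebra_simps)
qed

lemma ewin_W:
  assumes "1 \<le> a" "1 \<le> b" "i < z"
  shows "ewin k l (blk q \<sigma> a) (blk q \<sigma> b) i = \<sigma> ` W k l q a b i"
  unfolding W_def using il[OF assms(3)] qk kql by (intro window assms) auto

lemma W_sub: assumes "1 \<le> a" "1 \<le> b" "i < z" shows "W k l q a b i \<subseteq> J q a \<union> J q b"
proof -
  have "i*l+k-q \<le> q" using il[OF assms(3)] kql by linarith
  have bq: "b*q = (b-1)*q + q" using assms(2) by (cases b) auto
  show ?thesis unfolding W_def J_def using \<open>i*l+k-q \<le> q\<close> bq by auto
qed

lemma W_last: assumes "1 \<le> a" "i < z" shows "a * q \<in> W k l q a b i"
proof -
  have aq: "a*q = (a-1)*q + q" using assms(1) by (cases a) auto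
  show ?thesis unfolding W_def using il[OF assms(2)] l1 aq by auto
qed

lemma W_first: assumes "i < z" shows "(b-1) * q + 1 \<in> W k l q a b i"
  unfolding W_def using qk by auto

lemma W_first_a:
  assumes "1 \<le> a" "1 \<le> b" "a \<noteq> b" "i < z" "(a-1)*q+1 \<in> W k l q a b i"
  shows "i = 0"
proof -
  have "(a-1)*q+1 \<notin> J q b" using J_first[OF assms(1) qpos] J_disj assms by blast
  moreover have "{(b-1)*q+1 ..< (b-1)*q+1+(i*l+k-q)} \<subseteq> J q b"
    using W_sub[OF assms(1,2,4)] assms(1-3) unfolding W_def J_def
    using il[OF assms(4)] kql by (cases b) auto
  ultimately have "(a-1)*q+1 \<in> {(a-1)*q+1+i*l ..< a*q+1}" using assms(5) unfolding W_def by blast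
  then have "i*l = 0" by simp
  then show ?thesis using l1 by simp
qed

lemma W0_no_last_b:
  assumes "1 \<le> a" "1 \<le> b" "a \<noteq> b"
  shows "b*q \<notin> W k l q a b 0"
proof
  assume A: "b*q \<in> W k l q a b 0"
  have "b*q \<notin> J q a" using J_last[OF assms(2) qpos] J_disj assms by blast
  moreover have "{(a-1)*q+1+0*l ..< a*q+1} \<subseteq> J q a" unfolding J_def by auto
  ultimately have "b*q \<in> {(b-1)*q+1 ..< (b-1)*q+1+(0*l+k-q)}" using A unfolding W_def by blast
  moreover have "b*q = (b-1)*q + q" using assms(2) by (cases b) auto
  ultimately show False using kq by auto
qed


lemma Darc_blk:
  assumes "Darc H k l n \<sigma> v w"
  shows "\<exists>a b. v = blk q \<sigma> a \<and> w = blk q \<sigma> b \<and> a \<noteq> b \<and> 1 \<le> a \<and> a \<le> n div q \<and> 1 \<le> b \<and> b \<le> n div q"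
  using assms unfolding Darc_def Dverts_def by auto

lemma owned_blk:
  assumes "1 \<le> a" "1 \<le> b"
  shows "owned k l (blk q \<sigma> a) (blk q \<sigma> b) = {\<sigma> ` W k l q a b i | i. i < z}"
  unfolding owned_def using ewin_W[OF assms] by (metis (no_types, opaque_lifting))

lemma uniq:
  assumes perm: "\<sigma> permutes {1..n}"
    and ab: "1 \<le> a" "a \<le> n div q" "1 \<le> b" "b \<le> n div q" "a \<noteq> b"
    and cd: "1 \<le> c" "c \<le> n div q" "1 \<le> d" "d \<le> n div q" "c \<noteq> d"
    and ij: "i < z" "j < z"
    and eq: "\<sigma> ` W k l q a b i = \<sigma> ` W k l q c d j"
  shows "a = c \<and> b = d"
proof -
  have inj: "inj_on \<sigma> {1..n}" using perm permutes_inj_on by blast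
  have Wab: "W k l q a b i \<subseteq> {1..n}" using W_sub[OF ab(1) ab(3) ij(1)] J_sub ab by blast
  have Wcd: "W k l q c d j \<subseteq> {1..n}" using W_sub[OF cd(1) cd(3) ij(2)] J_sub cd by blast
  have mem: "x \<in> W k l q a b i" if "x \<in> W k l q c d j" for x
  proof -
    have "x \<in> {1..n}" using that Wcd by blast
    moreover have "\<sigma> x \<in> \<sigma> ` W k l q a b i" using that eq by blast
    ultimately show ?thesis using inj Wab inj_on_image_mem_iff by metis
  qed
  have c1: "c*q \<in> W k l q a b i" using mem W_last[OF cd(1) ij(2)] by blast
  have d1: "(d-1)*q+1 \<in> W k l q a b i" using mem W_first[OF ij(2)] by blast
  have cab: "c = a \<or> c = b"
  proof -
    have "c*q \<in> J q a \<union> J q b" using c1 W_sub[OF ab(1) ab(3) ij(1)] by blast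
    then show ?thesis using J_last[OF cd(1) qpos] J_disj ab(1,3) cd(1) by blast
  qed
  have dab: "d = a \<or> d = b"
  proof -
    have "(d-1)*q+1 \<in> J q a \<union> J q b" using d1 W_sub[OF ab(1) ab(3) ij(1)] by blast
    then show ?thesis using J_first[OF cd(3) qpos] J_disj ab(1,3) cd(3) by blast
  qed
  show ?thesis
  proof (cases "c = a")
    case True then show ?thesis using dab cd(5) by auto
  next
    case False
    then have cb: "c = b" and da: "d = a" using cab dab cd(5) by auto
    have "(a-1)*q+1 \<in> W k l q a b i" using d1 da by simp
    then have "i = 0" using W_first_a ab ij by blast
    moreover have "b*q \<in> W k l q a b i" using c1 cb by simp
    ultimately show ?thesis using W0_no_last_b ab by blast
  qed
qed

lemma owner_uniq:
  assumes perm: "\<sigma> permutes {1..n}"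
    and D1: "Darc H k l n \<sigma> v w" and e1: "e \<in> owned k l v w"
    and D2: "Darc H k l n \<sigma> v' w'" and e2: "e \<in> owned k l v' w'"
  shows "v = v' \<and> w = w'"
proof -
  obtain a b where ab: "v = blk q \<sigma> a" "w = blk q \<sigma> b" "a \<noteq> b" "1 \<le> a" "a \<le> n div q" "1 \<le> b" "b \<le> n div q"
    using Darc_blk[OF D1] by blast
  obtain c d where cd: "v' = blk q \<sigma> c" "w' = blk q \<sigma> d" "c \<noteq> d" "1 \<le> c" "c \<le> n div q" "1 \<le> d" "d \<le> n div q"
    using Darc_blk[OF D2] by blast
  obtain i where i: "i < z" "e = \<sigma> ` W k l q a b i" using e1 owned_blk ab by auto
  obtain j where j: "j < z" "e = \<sigma> ` W k l q c d j" using e2 owned_blk cd by auto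
  have "a = c \<and> b = d" using uniq[OF perm] ab cd i j by metis
  then show ?thesis using ab cd by simp
qed

lemma phi_eq:
  assumes perm: "\<sigma> permutes {1..n}"
    and D1: "Darc H k l n \<sigma> v w" and e1: "e \<in> owned k l v w"
  shows "phi H k l n \<sigma> e = owned k l v w"
  unfolding phi_def
proof (rule the_equality)
  show "\<exists>v' w'. Darc H k l n \<sigma> v' w' \<and> e \<in> owned k l v' w' \<and> owned k l v w = owned k l v' w'"
    using D1 e1 by blast
next
  fix A assume "\<exists>v' w'. Darc H k l n \<sigma> v' w' \<and> e \<in> owned k l v' w' \<and> A = owned k l v' w'"
  then obtain v' w' where "Darc H k l n \<sigma> v' w'" "e \<in> owned k l v' w'" "A = owned k l v' w'" by blast
  then show "A = owned k l v w" using owner_uniq[OF perm D1 e1] by blast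
qed

lemma owned_sub:
  assumes "Darc H k l n \<sigma> v w" "e \<in> owned k l v w"
  shows "\<exists>a b. v = blk q \<sigma> a \<and> w = blk q \<sigma> b \<and> a \<noteq> b \<and> 1 \<le> a \<and> a \<le> n div q \<and> 1 \<le> b \<and> b \<le> n div q
     \<and> e \<subseteq> \<sigma> ` (J q a \<union> J q b)"
proof -
  obtain a b where ab: "v = blk q \<sigma> a" "w = blk q \<sigma> b" "a \<noteq> b" "1 \<le> a" "a \<le> n div q" "1 \<le> b" "b \<le> n div q"
    using Darc_blk[OF assms(1)] by blast
  obtain i where i: "i < z" "e = \<sigma> ` W k l q a b i" using assms(2) owned_blk ab by auto
  have "e \<subseteq> \<sigma> ` (J q a \<union> J q b)" using i W_sub ab by blast
  then show ?thesis using ab by blast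
qed

lemma condensed_sub:
  assumes perm: "\<sigma> permutes {1..n}" and C: "condensed H k l n \<sigma> S"
  shows "\<exists>a b. 1 \<le> a \<and> a \<le> n div q \<and> 1 \<le> b \<and> b \<le> n div q \<and> a \<noteq> b \<and> S \<subseteq> \<sigma> ` (J q a \<union> J q b)"
proof -
  obtain e1 e2 where E: "S = e1 \<union> e2" "has_owner H k l n \<sigma> e1" "has_owner H k l n \<sigma> e2"
    "phi H k l n \<sigma> e1 \<inter> phi H k l n \<sigma> e2 \<noteq> {}"
    using C unfolding condensed_def by blast
  obtain v w where vw: "Darc H k l n \<sigma> v w" "e1 \<in> owned k l v w" using E(2) unfolding has_owner_def by blast
  obtain v' w' where vw': "Darc H k l n \<sigma> v' w'" "e2 \<in> owned k l v' w'" using E(3) unfolding has_owner_def by blast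
  obtain f where f: "f \<in> owned k l v w" "f \<in> owned k l v' w'"
    using E(4) phi_eq[OF perm vw] phi_eq[OF perm vw'] by blast
  have same: "v = v' \<and> w = w'" using owner_uniq[OF perm vw(1) f(1) vw'(1) f(2)] .
  obtain a b where ab: "v = blk q \<sigma> a" "w = blk q \<sigma> b" "a \<noteq> b" "1 \<le> a" "a \<le> n div q" "1 \<le> b" "b \<le> n div q"
    "e1 \<subseteq> \<sigma> ` (J q a \<union> J q b)" using owned_sub[OF vw] by blast
  obtain c d where cd: "v = blk q \<sigma> c" "w = blk q \<sigma> d" "1 \<le> c" "c \<le> n div q" "1 \<le> d" "d \<le> n div q"
    "e2 \<subseteq> \<sigma> ` (J q c \<union> J q d)" using owned_sub[OF vw'] same by blast
  have "c = a"
  proof -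
    have "\<sigma> (c*q) \<in> \<sigma> ` J q a"
    proof -
      have "blk q \<sigma> c = blk q \<sigma> a" using ab cd by simp
      then have "last (blk q \<sigma> c) = last (blk q \<sigma> a)" by simp
      moreover have "last (blk q \<sigma> x) = \<sigma> (x*q)" if "1 \<le> x" for x
      proof -
        have "x*q = (x-1)*q + q" using that by (cases x) auto
        then show ?thesis unfolding blk_def using qpos by (simp add: last_map)
      qed
      ultimately have "\<sigma> (c*q) = \<sigma> (a*q)" using ab cd by metis
      then show ?thesis using J_last[OF ab(4) qpos] by (metis imageI)
    qed
    moreover have "c*q \<in> {1..n}" using J_last[OF cd(3) qpos] J_sub cd by blast
    moreover have "J q a \<subseteq> {1..n}" using J_sub ab by blast
    moreover have "inj_on \<sigma> {1..n}" using perm permutes_inj_on by blast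
    ultimately have "c*q \<in> J q a" using inj_on_image_mem_iff by metis
    then show ?thesis using J_last[OF cd(3) qpos] J_disj ab cd by metis
  qed
  have "d = b"
  proof -
    have "\<sigma> (d*q) \<in> \<sigma> ` J q b"
    proof -
      have "blk q \<sigma> d = blk q \<sigma> b" using ab cd by simp
      then have "last (blk q \<sigma> d) = last (blk q \<sigma> b)" by simp
      moreover have "last (blk q \<sigma> x) = \<sigma> (x*q)" if "1 \<le> x" for x
      proof -
        have "x*q = (x-1)*q + q" using that by (cases x) auto
        then show ?thesis unfolding blk_def using qpos by (simp add: last_map)
      qed
      ultimately have "\<sigma> (d*q) = \<sigma> (b*q)" using ab cd by metis
      then show ?thesis using J_last[OF ab(6) qpos] by (metis imageI)
    qed
    moreover have "d*q \<in> {1..n}" using J_last[OF cd(5) qpos] J_sub cd by blast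
    moreover have "J q b \<subseteq> {1..n}" using J_sub ab by blast
    moreover have "inj_on \<sigma> {1..n}" using perm permutes_inj_on by blast
    ultimately have "d*q \<in> J q b" using inj_on_image_mem_iff by metis
    then show ?thesis using J_last[OF cd(5) qpos] J_disj ab cd by metis
  qed
  show ?thesis using ab cd E(1) \<open>c = a\<close> \<open>d = b\<close> by blast
qed

end




lemma perm_exists:
  assumes "S \<subseteq> {1..n::nat}" "S' \<subseteq> {1..n}" "card S = card S'"
  shows "\<exists>\<pi>. \<pi> permutes {1..n} \<and> \<pi> ` S = S'"
proof -
  have fin: "finite S" "finite S'" using assms finite_subset by blast+
  obtain f where f: "bij_betw f S S'" using finite_same_card_bij[OF fin assms(3)] by blast
  have c2: "card ({1..n} - S) = card ({1..n} - S')"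
    using assms fin by (simp add: card_Diff_subset)
  obtain g where g: "bij_betw g ({1..n} - S) ({1..n} - S')"
    using finite_same_card_bij[OF _ _ c2] by blast
  define h where "h = (\<lambda>x. if x \<in> S then f x else g x)"
  have "bij_betw h (S \<union> ({1..n} - S)) (S' \<union> ({1..n} - S'))"
    unfolding h_def by (rule bij_betw_disjoint_Un[OF f g]) auto
  then have hb: "bij_betw h {1..n} {1..n}" using assms by (simp add: Un_absorb1 Un_Diff_cancel)
  define \<pi> where "\<pi> = (\<lambda>x. if x \<in> {1..n} then h x else x)"
  have "bij_betw \<pi> {1..n} {1..n} = bij_betw h {1..n} {1..n}" by (rule bij_betw_cong) (simp add: \<pi>_def)
  then have "bij_betw \<pi> {1..n} {1..n}" using hb by simp
  then have "\<pi> permutes {1..n}" by (rule bij_imp_permutes) (auto simp: \<pi>_def)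
  moreover have "\<pi> ` S = S'"
  proof -
    have "\<pi> ` S = f ` S" unfolding \<pi>_def h_def using assms(1) by (intro image_cong) auto
    then show ?thesis using f by (simp add: bij_betw_def)
  qed
  ultimately show ?thesis by blast
qed

definition Fset :: "nat \<Rightarrow> nat set \<Rightarrow> nat set \<Rightarrow> (nat \<Rightarrow> nat) set" where
  "Fset n T S = {\<sigma>. \<sigma> permutes {1..n} \<and> S \<subseteq> \<sigma> ` T}"

lemma Fset_le:
  assumes "S \<subseteq> {1..n}" "S' \<subseteq> {1..n}" "card S = card S'"
  shows "card (Fset n T S) \<le> card (Fset n T S')"
proof -
  obtain \<pi> where pi: "\<pi> permutes {1..n}" "\<pi> ` S = S'" using perm_exists[OF assms] by blast
  show ?thesis
  proof (rule card_inj_on_le)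
    show "inj_on ((\<circ>) \<pi>) (Fset n T S)"
    proof (rule inj_onI)
      fix x y assume "\<pi> \<circ> x = \<pi> \<circ> y"
      then show "x = y" using permutes_inj[OF pi(1)] by (simp add: fun_eq_iff inj_eq)
    qed
    show "(\<circ>) \<pi> ` Fset n T S \<subseteq> Fset n T S'"
    proof
      fix \<tau> assume "\<tau> \<in> (\<circ>) \<pi> ` Fset n T S"
      then obtain \<sigma> where s: "\<sigma> permutes {1..n}" "S \<subseteq> \<sigma> ` T" "\<tau> = \<pi> \<circ> \<sigma>" unfolding Fset_def by blast
      have "\<tau> permutes {1..n}" using s permutes_compose pi by blast
      moreover have "S' \<subseteq> \<tau> ` T" using s pi by (auto simp: image_comp[symmetric])
      ultimately show "\<tau> \<in> Fset n T S'" unfolding Fset_def by blast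
    qed
    show "finite (Fset n T S')" unfolding Fset_def
      by (rule finite_subset[OF _ finite_permutations[of "{1..n}"]]) auto
  qed
qed

lemma Fset_eq:
  assumes "S \<subseteq> {1..n}" "S' \<subseteq> {1..n}" "card S = card S'"
  shows "card (Fset n T S) = card (Fset n T S')"
  using Fset_le[OF assms, of T] Fset_le[OF assms(2,1) assms(3)[symmetric], of T] by linarith

lemma sum_card_swap:
  assumes "finite A" "finite B"
  shows "(\<Sum>x\<in>A. card {y\<in>B. R x y}) = (\<Sum>y\<in>B. card {x\<in>A. R x y})"
proof -
  have 1: "card {y\<in>B. R x y} = (\<Sum>y\<in>B. if R x y then 1 else 0)" for x
    using assms by (simp add: sum.If_cases Int_def conj_commute)
  have 2: "card {x\<in>A. R x y} = (\<Sum>x\<in>A. if R x y then 1 else 0)" for y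
    using assms by (simp add: sum.If_cases Int_def conj_commute)
  show ?thesis unfolding 1 2 by (rule sum.swap)
qed

lemma Fset_card:
  assumes T: "T \<subseteq> {1..n}" and S: "S \<subseteq> {1..n}" "card S = s"
  shows "card (Fset n T S) * (n choose s) = fact n * (card T choose s)"
proof -
  define Sub where "Sub = {S'. S' \<subseteq> {1..n} \<and> card S' = s}"
  define P where "P = {\<sigma>. \<sigma> permutes {1..(n::nat)}}"
  have finSub: "finite Sub" unfolding Sub_def by simp
  have finP: "finite P" unfolding P_def by (rule finite_permutations) simp
  have cSub: "card Sub = n choose s" unfolding Sub_def using n_subsets[of "{1..n}" s] by simp
  have cP: "card P = fact n" unfolding P_def using card_permutations[of "{1..n}" n] by simp
  have "(\<Sum>S'\<in>Sub. card (Fset n T S')) = (\<Sum>S'\<in>Sub. card {\<sigma>\<in>P. S' \<subseteq> \<sigma> ` T})"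
    unfolding Fset_def P_def by simp
  also have "\<dots> = (\<Sum>\<sigma>\<in>P. card {S'\<in>Sub. S' \<subseteq> \<sigma> ` T})" by (rule sum_card_swap[OF finSub finP])
  also have "\<dots> = (\<Sum>\<sigma>\<in>P. card T choose s)"
  proof (rule sum.cong[OF refl])
    fix \<sigma> assume "\<sigma> \<in> P"
    then have p: "\<sigma> permutes {1..n}" unfolding P_def by simp
    have sub: "\<sigma> ` T \<subseteq> {1..n}" using permutes_image[OF p] T by blast
    have "{S'\<in>Sub. S' \<subseteq> \<sigma> ` T} = {S'. S' \<subseteq> \<sigma> ` T \<and> card S' = s}" unfolding Sub_def using sub by blast
    moreover have "card (\<sigma> ` T) = card T"
      using card_image inj_on_subset[OF permutes_inj_on[OF p] T] by blast
    ultimately show "card {S'\<in>Sub. S' \<subseteq> \<sigma> ` T} = card T choose s" using n_subsets[of "\<sigma> ` T" s] T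
      by (simp add: finite_subset)
  qed
  also have "\<dots> = fact n * (card T choose s)" using cP by simp
  finally have A: "(\<Sum>S'\<in>Sub. card (Fset n T S')) = fact n * (card T choose s)" .
  have "(\<Sum>S'\<in>Sub. card (Fset n T S')) = (\<Sum>S'\<in>Sub. card (Fset n T S))"
  proof (rule sum.cong[OF refl])
    fix S' assume "S' \<in> Sub"
    then have "S' \<subseteq> {1..n}" "card S' = card S" using S unfolding Sub_def by auto
    then show "card (Fset n T S') = card (Fset n T S)" using Fset_eq S(1) by blast
  qed
  also have "\<dots> = card (Fset n T S) * (n choose s)" using cSub by simp
  finally show ?thesis using A by simp
qed




context Cfg begin

definition Acond :: "nat set set \<Rightarrow> nat \<Rightarrow> nat set \<Rightarrow> (nat \<Rightarrow> nat) set" where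
  "Acond H n S = {\<sigma>. \<sigma> permutes {1..n} \<and> condensed H k l n \<sigma> S}"

lemma Acond_bound:
  assumes S: "S \<subseteq> {1..n}" "card S = s"
  shows "card (Acond H n S) * (n choose s) \<le> (n div q)^2 * (fact n * ((2*q) choose s))"
proof -
  define N where "N = n div q"
  define Pairs where "Pairs = {p \<in> {1..N} \<times> {1..N}. fst p \<noteq> snd p}"
  have finP: "finite Pairs" unfolding Pairs_def by simp
  have cardP: "card Pairs \<le> N^2"
  proof -
    have "card Pairs \<le> card ({1..N} \<times> {1..N})" unfolding Pairs_def by (rule card_mono) auto
    then show ?thesis by (simp add: power2_eq_square)
  qed
  have sub: "Acond H n S \<subseteq> (\<Union>p\<in>Pairs. Fset n (J q (fst p) \<union> J q (snd p)) S)"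
  proof
    fix \<sigma> assume "\<sigma> \<in> Acond H n S"
    then have p: "\<sigma> permutes {1..n}" and c: "condensed H k l n \<sigma> S" unfolding Acond_def by auto
    obtain a b where "1 \<le> a" "a \<le> N" "1 \<le> b" "b \<le> N" "a \<noteq> b" "S \<subseteq> \<sigma> ` (J q a \<union> J q b)"
      using condensed_sub[OF p c] N_def by blast
    then show "\<sigma> \<in> (\<Union>p\<in>Pairs. Fset n (J q (fst p) \<union> J q (snd p)) S)"
      unfolding Pairs_def Fset_def using p by (intro UN_I[of "(a,b)"]) auto
  qed
  have finF: "finite (Fset n T S)" for T unfolding Fset_def
    by (rule finite_subset[OF _ finite_permutations[of "{1..n}"]]) auto
  have eachF: "card (Fset n (J q (fst p) \<union> J q (snd p)) S) * (n choose s) = fact n * ((2*q) choose s)"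
    if pP: "p \<in> Pairs" for p
  proof -
    obtain a b where ab: "p = (a,b)" "1 \<le> a" "a \<le> N" "1 \<le> b" "b \<le> N" "a \<noteq> b"
      using pP unfolding Pairs_def by (cases p) auto
    have T: "J q a \<union> J q b \<subseteq> {1..n}" using J_sub ab N_def by blast
    have disj: "J q a \<inter> J q b = {}" using J_disj ab by blast
    have fJ: "finite (J q x)" for x unfolding J_def by simp
    have "card (J q a \<union> J q b) = 2*q" using card_Un_disjoint[OF fJ fJ disj] J_card ab by simp
    then show ?thesis using Fset_card[OF T S] ab by simp
  qed
  have "card (Acond H n S) \<le> card (\<Union>p\<in>Pairs. Fset n (J q (fst p) \<union> J q (snd p)) S)"
    by (rule card_mono) (use finP finF sub in auto)
  also have "\<dots> \<le> (\<Sum>p\<in>Pairs. card (Fset n (J q (fst p) \<union> J q (snd p)) S))"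
    by (rule card_UN_le[OF finP])
  finally have "card (Acond H n S) * (n choose s) \<le> (\<Sum>p\<in>Pairs. card (Fset n (J q (fst p) \<union> J q (snd p)) S)) * (n choose s)"
    by (rule mult_right_mono) simp
  also have "\<dots> = (\<Sum>p\<in>Pairs. card (Fset n (J q (fst p) \<union> J q (snd p)) S) * (n choose s))"
    by (simp add: sum_distrib_right)
  also have "\<dots> = (\<Sum>p\<in>Pairs. fact n * ((2*q) choose s))" using eachF by simp
  also have "\<dots> = card Pairs * (fact n * ((2*q) choose s))" by simp
  also have "\<dots> \<le> N^2 * (fact n * ((2*q) choose s))" using cardP by (rule mult_right_mono) simp
  finally show ?thesis unfolding N_def .
qed


lemma E_card:
  assumes I: "I \<subseteq> {..<r}" "card I = m" and AP: "A \<subseteq> {\<sigma>. \<sigma> permutes {1..n}}"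
  shows "card (PiE {..<r} (\<lambda>i. if i \<in> I then A else {\<sigma>. \<sigma> permutes {1..n}})) = card A ^ m * fact n ^ (r - m)"
proof -
  have cP: "card {\<sigma>. \<sigma> permutes {1..n}} = fact n" using card_permutations[of "{1..n}" n] by simp
  have "card (PiE {..<r} (\<lambda>i. if i \<in> I then A else {\<sigma>. \<sigma> permutes {1..n}}))
     = (\<Prod>i<r. card (if i \<in> I then A else {\<sigma>. \<sigma> permutes {1..n}}))" by (simp add: card_PiE)
  also have "\<dots> = (\<Prod>i<r. if i \<in> I then card A else fact n)" using cP by (intro prod.cong) auto
  also have "\<dots> = (\<Prod>i\<in>{..<r} \<inter> {x. x \<in> I}. card A) * (\<Prod>i\<in>{..<r} \<inter> - {x. x \<in> I}. fact n)"
    by (rule prod.If_cases) simp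
  also have "{..<r} \<inter> {x. x \<in> I} = I" using I by auto
  also have "{..<r} \<inter> - {x. x \<in> I} = {..<r} - I" by auto
  finally have X: "card (PiE {..<r} (\<lambda>i. if i \<in> I then A else {\<sigma>. \<sigma> permutes {1..n}}))
     = (\<Prod>i\<in>I. card A) * (\<Prod>i\<in>{..<r} - I. fact n)" .
  have "card ({..<r} - I) = r - m" using I by (simp add: card_Diff_subset finite_subset)
  then show ?thesis using I X by simp
qed

lemma bad_sub:
  "bad H k l n r \<subseteq> (\<Union>t\<in>{1..2*q-k}. \<Union>S\<in>{S. S \<subseteq> {1..n} \<and> card S = k+t}.
      \<Union>I\<in>{I. I \<subseteq> {..<r} \<and> card I = 4*q+2}.
        PiE {..<r} (\<lambda>i. if i \<in> I then Acond H n S else {\<sigma>. \<sigma> permutes {1..n}}))"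
proof
  fix \<sigma>s assume "\<sigma>s \<in> bad H k l n r"
  then obtain t S where b: "\<sigma>s \<in> perm_tuples n r" "1 \<le> t" "t \<le> 2*q-k" "S \<subseteq> {1..n}" "card S = k+t"
     "card {i \<in> {..<r}. condensed H k l n (\<sigma>s i) S} > 4*q+1"
    unfolding bad_def by blast
  obtain I where I: "I \<subseteq> {i \<in> {..<r}. condensed H k l n (\<sigma>s i) S}" "card I = 4*q+2"
    using obtain_subset_with_card_n[of "4*q+2" "{i \<in> {..<r}. condensed H k l n (\<sigma>s i) S}"] b(6) by auto
  have X: "\<sigma>s \<in> PiE {..<r} (\<lambda>i. if i \<in> I then Acond H n S else {\<sigma>. \<sigma> permutes {1..n}})"
    using b(1) I(1) unfolding perm_tuples_def Acond_def PiE_def Pi_def by auto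
  have tI: "t \<in> {1..2*q-k}" using b by simp
  have SI: "S \<in> {S. S \<subseteq> {1..n} \<and> card S = k+t}" using b by simp
  have II: "I \<in> {I. I \<subseteq> {..<r} \<and> card I = 4*q+2}" using I by auto
  then show "\<sigma>s \<in> (\<Union>t\<in>{1..2*q-k}. \<Union>S\<in>{S. S \<subseteq> {1..n} \<and> card S = k+t}.
      \<Union>I\<in>{I. I \<subseteq> {..<r} \<and> card I = 4*q+2}.
        PiE {..<r} (\<lambda>i. if i \<in> I then Acond H n S else {\<sigma>. \<sigma> permutes {1..n}}))"
    by (intro UN_I[OF tI] UN_I[OF SI] UN_I[OF II] X)
qed

lemma bad_card:
  "card (bad H k l n r) \<le> (\<Sum>t\<in>{1..2*q-k}. \<Sum>S\<in>{S. S \<subseteq> {1..n} \<and> card S = k+t}.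
      \<Sum>I\<in>{I. I \<subseteq> {..<r} \<and> card I = 4*q+2}. card (Acond H n S) ^ (4*q+2) * fact n ^ (r - (4*q+2)))"
proof -
  let ?P = "{\<sigma>. \<sigma> permutes {1..n}}"
  let ?E = "\<lambda>S I. PiE {..<r} (\<lambda>i. if i \<in> I then Acond H n S else ?P)"
  have finP: "finite ?P" by (rule finite_permutations) simp
  have finA: "finite (Acond H n S)" for S unfolding Acond_def by (rule finite_subset[OF _ finP]) auto
  have finE: "finite (?E S I)" for S I by (rule finite_PiE) (use finP finA in auto)
  have fin1: "finite {S. S \<subseteq> {1..n} \<and> card S = s}" for s by simp
  have fin2: "finite {I. I \<subseteq> {..<r} \<and> card I = 4*q+2}" by simp
  have "card (bad H k l n r) \<le> card (\<Union>t\<in>{1..2*q-k}. \<Union>S\<in>{S. S \<subseteq> {1..n} \<and> card S = k+t}.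
      \<Union>I\<in>{I. I \<subseteq> {..<r} \<and> card I = 4*q+2}. ?E S I)"
    by (rule card_mono[OF _ bad_sub]) (intro finite_UN_I finite_atLeastAtMost fin1 fin2 finE)
  also have "\<dots> \<le> (\<Sum>t\<in>{1..2*q-k}. card (\<Union>S\<in>{S. S \<subseteq> {1..n} \<and> card S = k+t}.
      \<Union>I\<in>{I. I \<subseteq> {..<r} \<and> card I = 4*q+2}. ?E S I))" by (rule card_UN_le) simp
  also have "\<dots> \<le> (\<Sum>t\<in>{1..2*q-k}. \<Sum>S\<in>{S. S \<subseteq> {1..n} \<and> card S = k+t}. card (
      \<Union>I\<in>{I. I \<subseteq> {..<r} \<and> card I = 4*q+2}. ?E S I))"
    by (intro sum_mono card_UN_le fin1)
  also have "\<dots> \<le> (\<Sum>t\<in>{1..2*q-k}. \<Sum>S\<in>{S. S \<subseteq> {1..n} \<and> card S = k+t}.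
      \<Sum>I\<in>{I. I \<subseteq> {..<r} \<and> card I = 4*q+2}. card (?E S I))"
    by (intro sum_mono card_UN_le fin2)
  also have "\<dots> = (\<Sum>t\<in>{1..2*q-k}. \<Sum>S\<in>{S. S \<subseteq> {1..n} \<and> card S = k+t}.
      \<Sum>I\<in>{I. I \<subseteq> {..<r} \<and> card I = 4*q+2}. card (Acond H n S) ^ (4*q+2) * fact n ^ (r - (4*q+2)))"
  proof (intro sum.cong refl)
    fix S I assume "I \<in> {I. I \<subseteq> {..<r} \<and> card I = 4*q+2}"
    then have "I \<subseteq> {..<r}" "card I = 4*q+2" by auto
    moreover have "Acond H n S \<subseteq> {\<sigma>. \<sigma> permutes {1..n}}" unfolding Acond_def by blast
    ultimately show "card (?E S I) = card (Acond H n S) ^ (4*q+2) * fact n ^ (r - (4*q+2))"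
      by (rule E_card)
  qed
  finally show ?thesis .
qed


lemma term_bound:
  assumes S: "S \<subseteq> {1..n}" "card S = s" and I: "I \<subseteq> {..<r}" "card I = m"
  shows "real (card (Acond H n S) ^ m * fact n ^ (r - m)) / real (fact n ^ r)
     \<le> (real ((n div q)^2) * real ((2*q) choose s) / real (n choose s)) ^ m"
proof -
  have sn: "s \<le> n" using S card_mono[of "{1..n}" S] by simp
  have cpos: "real (n choose s) > 0" using sn by simp
  have mr: "m \<le> r" using I card_mono[of "{..<r}" I] by simp
  have fpos: "real (fact n) > 0" by simp
  have A: "real (card (Acond H n S)) \<le> real (fact n) * (real ((n div q)^2) * real ((2*q) choose s) / real (n choose s))"
  proof -
    have "real (card (Acond H n S) * (n choose s)) \<le> real ((n div q)^2 * (fact n * ((2*q) choose s)))"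
      using Acond_bound[OF S] by (simp only: of_nat_le_iff)
    then have "real (card (Acond H n S)) * real (n choose s) \<le> real (fact n) * (real ((n div q)^2) * real ((2*q) choose s))"
      by (simp add: algebra_simps)
    then show ?thesis using cpos by (simp add: field_simps)
  qed
  define \<rho> where "\<rho> = real ((n div q)^2) * real ((2*q) choose s) / real (n choose s)"
  have "real (card (Acond H n S) ^ m * fact n ^ (r - m)) = real (card (Acond H n S)) ^ m * real (fact n) ^ (r - m)"
    by simp
  also have "\<dots> \<le> (real (fact n) * \<rho>) ^ m * real (fact n) ^ (r - m)"
    using A unfolding \<rho>_def by (intro mult_right_mono power_mono) auto
  also have "\<dots> = \<rho> ^ m * (real (fact n) ^ m * real (fact n) ^ (r - m))" by (simp add: power_mult_distrib)
  also have "\<dots> = \<rho> ^ m * real (fact n) ^ r" using mr by (simp flip: power_add)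
  finally have "real (card (Acond H n S) ^ m * fact n ^ (r - m)) \<le> \<rho> ^ m * real (fact n) ^ r" .
  then show ?thesis unfolding \<rho>_def using fpos by (simp add: divide_le_eq)
qed

lemma fail_bound:
  "fail_prob H k l n r \<le> (\<Sum>t\<in>{1..2*q-k}. real (n choose (k+t)) * real (r choose (4*q+2)) *
      (real ((n div q)^2) * real ((2*q) choose (k+t)) / real (n choose (k+t))) ^ (4*q+2))"
proof -
  let ?m = "4*q+2"
  have cpt: "card (perm_tuples n r) = fact n ^ r"
    unfolding perm_tuples_def using card_permutations[of "{1..n}" n] by (simp add: card_PiE)
  have "fail_prob H k l n r = real (card (bad H k l n r)) / real (fact n ^ r)"
    unfolding fail_prob_def cpt ..
  also have "\<dots> \<le> real (\<Sum>t\<in>{1..2*q-k}. \<Sum>S\<in>{S. S \<subseteq> {1..n} \<and> card S = k+t}.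
      \<Sum>I\<in>{I. I \<subseteq> {..<r} \<and> card I = ?m}. card (Acond H n S) ^ ?m * fact n ^ (r - ?m)) / real (fact n ^ r)"
    by (intro divide_right_mono) (simp only: of_nat_le_iff bad_card, simp)
  also have "\<dots> = (\<Sum>t\<in>{1..2*q-k}. \<Sum>S\<in>{S. S \<subseteq> {1..n} \<and> card S = k+t}.
      \<Sum>I\<in>{I. I \<subseteq> {..<r} \<and> card I = ?m}. real (card (Acond H n S) ^ ?m * fact n ^ (r - ?m)) / real (fact n ^ r))"
    by (simp add: sum_divide_distrib)
  also have "\<dots> \<le> (\<Sum>t\<in>{1..2*q-k}. \<Sum>S\<in>{S. S \<subseteq> {1..n} \<and> card S = k+t}.
      \<Sum>I\<in>{I. I \<subseteq> {..<r} \<and> card I = ?m}.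
      (real ((n div q)^2) * real ((2*q) choose (k+t)) / real (n choose (k+t))) ^ ?m)"
  proof (intro sum_mono)
    fix t S I assume "S \<in> {S. S \<subseteq> {1..n} \<and> card S = k+t}" "I \<in> {I. I \<subseteq> {..<r} \<and> card I = ?m}"
    then have "S \<subseteq> {1..n}" "card S = k+t" "I \<subseteq> {..<r}" "card I = ?m" by auto
    then show "real (card (Acond H n S) ^ ?m * fact n ^ (r - ?m)) / real (fact n ^ r)
      \<le> (real ((n div q)^2) * real ((2*q) choose (k+t)) / real (n choose (k+t))) ^ ?m"
      by (rule term_bound)
  qed
  also have "\<dots> = (\<Sum>t\<in>{1..2*q-k}. real (n choose (k+t)) * real (r choose ?m) *
      (real ((n div q)^2) * real ((2*q) choose (k+t)) / real (n choose (k+t))) ^ ?m)"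
  proof (intro sum.cong refl)
    fix t
    have c1: "card {S. S \<subseteq> {1..n} \<and> card S = k+t} = n choose (k+t)" using n_subsets[of "{1..n}" "k+t"] by simp
    have c2: "card {I. I \<subseteq> {..<r} \<and> card I = ?m} = r choose ?m" using n_subsets[of "{..<r}" ?m] by simp
    show "(\<Sum>S\<in>{S. S \<subseteq> {1..n} \<and> card S = k+t}. \<Sum>I\<in>{I. I \<subseteq> {..<r} \<and> card I = ?m}.
      (real ((n div q)^2) * real ((2*q) choose (k+t)) / real (n choose (k+t))) ^ ?m) =
      real (n choose (k+t)) * real (r choose ?m) *
      (real ((n div q)^2) * real ((2*q) choose (k+t)) / real (n choose (k+t))) ^ ?m"
      unfolding sum_constant c1 c2 by (rule mult.assoc[symmetric])
  qed
  finally show ?thesis .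
qed

end




lemma asym_term:
  fixes n r s k q N m :: nat
  assumes m: "m = 4*q+2" and s1: "k+1 \<le> s" and s2: "s \<le> 2*q" and sn: "s \<le> n" and N: "N \<le> n"
    and k1: "1 \<le> k"
  shows "real n * (real (n choose s) * real (r choose m) * (real (N^2) * real (B) / real (n choose s)) ^ m)
     \<le> real B ^ m * real s ^ (s*(m-1)) * (real r / real n powr (real k - 3/2)) ^ m"
proof -
  define X where "X = real n"
  define R where "R = real r"
  define c where "c = real (n choose s)"
  define x where "x = R / X powr (real k - 3/2)"
  have s0: "s \<ge> 1" using s1 by simp
  have n1: "n \<ge> 1" using s0 sn by simp
  have Xpos: "X > 0" "X \<ge> 1" unfolding X_def using n1 by auto
  have m1: "m \<ge> 1" using m by simp
  have cpos: "c > 0" unfolding c_def using sn by simp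
  have cge: "(X / real s) ^ s \<le> c" unfolding c_def X_def by (rule binomial_ge_n_over_k_pow_k[OF sn])
  have Rm: "real (r choose m) \<le> R ^ m"
  proof (cases "m \<le> r")
    case True then show ?thesis unfolding R_def using binomial_le_pow[OF True]
      by (metis of_nat_le_iff of_nat_power)
  next
    case False then show ?thesis unfolding R_def by (simp add: binomial_eq_0)
  qed
  have NX: "real (N^2) \<le> X^2" unfolding X_def using N by simp
  have B0: "real B \<ge> 0" by simp
  have eqc: "c * (real (N^2) * real B / c) ^ m = (real (N^2) * real B) ^ m / c ^ (m - 1)"
  proof -
    have "c ^ m = c * c ^ (m-1)" using m1 by (metis power_eq_if not_one_le_zero)
    then show ?thesis using cpos by (simp add: power_divide)
  qed
  have "real n * (c * real (r choose m) * (real (N^2) * real B / c) ^ m)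
      = X * real (r choose m) * (c * (real (N^2) * real B / c) ^ m)" unfolding X_def by (simp only: mult_ac)
  also have "\<dots> = X * real (r choose m) * ((real (N^2) * real B) ^ m / c ^ (m - 1))" by (simp only: eqc)
  also have "\<dots> \<le> X * R ^ m * ((X^2 * real B) ^ m / ((X / real s) ^ s) ^ (m - 1))"
  proof -
    have p1: "(X / real s) ^ s > 0" using Xpos s0 by simp
    have "(real (N^2) * real B) ^ m \<le> (X^2 * real B) ^ m" using NX by (intro power_mono mult_right_mono) auto
    moreover have "((X / real s) ^ s) ^ (m - 1) \<le> c ^ (m - 1)" using cge p1 by (intro power_mono) auto
    ultimately have "(real (N^2) * real B) ^ m / c ^ (m - 1) \<le> (X^2 * real B) ^ m / ((X / real s) ^ s) ^ (m - 1)"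
      using p1 cpos by (intro frac_le) auto
    then show ?thesis using Rm Xpos cpos by (intro mult_mono) auto
  qed
  also have "\<dots> = real B ^ m * real s ^ (s*(m-1)) * (R ^ m * X ^ (1 + 2*m) / X ^ (s*(m-1)))"
    using Xpos s0 by (simp add: power_mult_distrib power_divide power_mult[symmetric] power_add field_simps)
  also have "R ^ m * X ^ (1 + 2*m) / X ^ (s*(m-1)) = x ^ m * X powr (1 + 2*real m - real s * (real m - 1) + (real k - 3/2) * real m)"
  proof -
    have Rx: "R = x * X powr (real k - 3/2)" unfolding x_def using Xpos by simp
    have "R ^ m = x ^ m * X powr ((real k - 3/2) * real m)"
      unfolding Rx power_mult_distrib using Xpos by (simp add: powr_realpow[symmetric] powr_powr)
    moreover have "X ^ (1 + 2*m) = X powr (1 + 2 * real m)" using powr_realpow[of X "1+2*m"] Xpos by simp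
    moreover have "X ^ (s*(m-1)) = X powr (real s * (real m - 1))"
    proof -
      have "real (s*(m-1)) = real s * (real m - 1)" using m1 by (simp add: of_nat_diff)
      moreover have "X powr real (s*(m-1)) = X ^ (s*(m-1))" using powr_realpow[of X "s*(m-1)"] Xpos by simp
      ultimately show ?thesis by metis
    qed
    ultimately have "R ^ m * X ^ (1 + 2*m) / X ^ (s*(m-1)) = x ^ m * (X powr ((real k - 3/2) * real m) * X powr (1 + 2 * real m) / X powr (real s * (real m - 1)))"
      by simp
    also have "X powr ((real k - 3/2) * real m) * X powr (1 + 2 * real m) / X powr (real s * (real m - 1))
       = X powr (1 + 2*real m - real s * (real m - 1) + (real k - 3/2) * real m)"
      by (simp only: powr_add powr_diff) (simp add: field_simps)
    finally show ?thesis .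
  qed
  also have "X powr (1 + 2*real m - real s * (real m - 1) + (real k - 3/2) * real m) \<le> 1"
  proof -
    have "real m * (real k - real s + 1/2) \<le> real m * (-1/2)"
      using s1 by (intro mult_left_mono) auto
    then have "1 + 2*real m - real s * (real m - 1) + (real k - 3/2) * real m \<le> 0"
      using s2 m by (simp add: algebra_simps)
    then have "X powr (1 + 2*real m - real s * (real m - 1) + (real k - 3/2) * real m) \<le> X powr 0"
      using Xpos by (intro powr_mono) auto
    then show ?thesis using Xpos by simp
  qed
  finally show ?thesis unfolding x_def R_def X_def c_def
    by (simp add: mult_left_mono)
qed


theorem lemma7:
  fixes k l :: nat and Hs :: "nat \<Rightarrow> nat set set" and r :: "nat \<Rightarrow> nat"
  assumes "1 \<le> l" and "2 * l < k"
    and "\<And>n. qpar k l dvd n \<Longrightarrow> kgraph k n (Hs n)"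
    and "(\<lambda>n. real (r n) / real n powr (real k - 3 / 2)) \<longlonglongrightarrow> 0"
  shows "\<forall>\<epsilon>>0. \<exists>N. \<forall>n\<ge>N. qpar k l dvd n \<longrightarrow>
           real n * fail_prob (Hs n) k l n (r n) \<le> \<epsilon>"
proof (intro allI impI)
  fix \<epsilon> :: real assume eps: "\<epsilon> > 0"
  interpret Cfg k l using assms(1,2) by unfold_locales
  define m where "m = 4*q+2"
  define x where "x = (\<lambda>n. real (r n) / real n powr (real k - 3 / 2))"
  define K where "K = (\<Sum>t\<in>{1..2*q-k}. real ((2*q) choose (k+t)) ^ m * real (k+t) ^ ((k+t)*(m-1)))"
  have "(\<lambda>n. K * x n ^ m) \<longlonglongrightarrow> K * 0 ^ m"
    using assms(4) unfolding x_def by (intro tendsto_mult tendsto_const tendsto_power)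
  then have "(\<lambda>n. K * x n ^ m) \<longlonglongrightarrow> 0" using m_def by simp
  then have "\<forall>\<^sub>F n in sequentially. K * x n ^ m < \<epsilon>" using eps by (rule order_tendstoD(2))
  then obtain N1 where N1: "\<And>n. n \<ge> N1 \<Longrightarrow> K * x n ^ m < \<epsilon>" unfolding eventually_sequentially by blast
  show "\<exists>N. \<forall>n\<ge>N. q dvd n \<longrightarrow> real n * fail_prob (Hs n) k l n (r n) \<le> \<epsilon>"
  proof (intro exI allI impI)
    fix n assume n: "max N1 (2*q) \<le> n"
    have "real n * fail_prob (Hs n) k l n (r n) \<le> real n * (\<Sum>t\<in>{1..2*q-k}. real (n choose (k+t)) * real (r n choose m) *
      (real ((n div q)^2) * real ((2*q) choose (k+t)) / real (n choose (k+t))) ^ m)"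
      unfolding m_def by (intro mult_left_mono fail_bound) simp
    also have "\<dots> = (\<Sum>t\<in>{1..2*q-k}. real n * (real (n choose (k+t)) * real (r n choose m) *
      (real ((n div q)^2) * real ((2*q) choose (k+t)) / real (n choose (k+t))) ^ m))"
      by (simp add: sum_distrib_left)
    also have "\<dots> \<le> (\<Sum>t\<in>{1..2*q-k}. real ((2*q) choose (k+t)) ^ m * real (k+t) ^ ((k+t)*(m-1)) * x n ^ m)"
    proof (intro sum_mono)
      fix t assume t: "t \<in> {1..2*q-k}"
      have "n div q \<le> n" by simp
      then show "real n * (real (n choose (k+t)) * real (r n choose m) *
      (real ((n div q)^2) * real ((2*q) choose (k+t)) / real (n choose (k+t))) ^ m)
        \<le> real ((2*q) choose (k+t)) ^ m * real (k+t) ^ ((k+t)*(m-1)) * x n ^ m"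
        unfolding x_def using t n assms(2) by (intro asym_term[OF m_def]) auto
    qed
    also have "\<dots> = K * x n ^ m" unfolding K_def by (simp add: sum_distrib_right)
    also have "\<dots> \<le> \<epsilon>" using N1[of n] n by simp
    finally show "real n * fail_prob (Hs n) k l n (r n) \<le> \<epsilon>" .
  qed
qed

end
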